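(* Let $\sigma>0$ and let $\mu_1,\dots,\mu_n,\mu_1^*,\dots,\mu_n^*\in\mathbb{R}$. Let $X_1,\dots,X_n$ be independent random variables with $X_i\sim \mathrm{Gum}(\mu_i,\sigma)$, and let $Y_1,\dots,Y_n$ be independent random variables with $Y_i\sim \mathrm{Gum}(\mu_i^*,\sigma)$, $i=1,\dots,n$. Let $X_{n:n}=\max\{X_1,\dots,X_n\}$ and $Y_{n:n}=\max\{Y_1,\dots,Y_n\}$. If $\mu_i\geq \mu_i^*$ for all $i=1,\dots,n$, then $X_{n:n}\geq_{lr} Y_{n:n}$.
   Context: A random variable $X$ is said to have the Gumbel distribution $\mathrm{Gum}(\mu,\sigma)$ (location $\mu\in\mathbb{R}$, scale $\sigma>0$) if its cumulative distribution function is $F(x)=e^{-e^{-(x-\mu)/\sigma}}$, $x\in\mathbb{R}$. For continuous random variables $X,Y$ with densities $f_X,f_Y$, $X\leq_{lr}Y$ (likelihood ratio order) means that $f_Y(x)/f_X(x)$ is increasing in $x$; $X\geq_{lr}Y$ means $Y\leq_{lr}X$. *)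

theory Defs
  imports "HOL-Probability.Probability"
begin

definition gumbel_cdf :: "real \<Rightarrow> real \<Rightarrow> real \<Rightarrow> real" where
  "gumbel_cdf mu scl x = exp (- exp (- (x - mu) / scl))"

definition is_gumbel :: "'a measure \<Rightarrow> ('a \<Rightarrow> real) \<Rightarrow> real \<Rightarrow> real \<Rightarrow> bool" where
  "is_gumbel M X mu scl \<longleftrightarrow> X \<in> borel_measurable M \<and>
     (\<forall>x. measure M {\<omega> \<in> space M. X \<omega> \<le> x} = gumbel_cdf mu scl x)"

definition lr_le :: "'a measure \<Rightarrow> ('a \<Rightarrow> real) \<Rightarrow> 'b measure \<Rightarrow> ('b \<Rightarrow> real) \<Rightarrow> bool" where
  "lr_le M X N Y \<longleftrightarrow> (\<exists>fX fY.
     (\<forall>x. 0 \<le> fX x) \<and> (\<forall>x. 0 \<le> fY x) \<and>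
     distributed M lborel X (\<lambda>x. ennreal (fX x)) \<and>
     distributed N lborel Y (\<lambda>x. ennreal (fY x)) \<and>
     mono (\<lambda>x. fY x / fX x))"

end

theory Submission
  imports Defs "HOL-Real_Asymp.Real_Asymp"
begin

definition gpdf :: "real \<Rightarrow> real \<Rightarrow> real \<Rightarrow> real" where
  "gpdf m s x = exp (- (x - m) / s) * exp (- exp (- (x - m) / s)) / s"

lemma gpdf_nonneg: "s > 0 \<Longrightarrow> 0 \<le> gpdf m s x"
  by (simp add: gpdf_def)

lemma gpdf_borel[measurable]: "gpdf m s \<in> borel_measurable borel"
  unfolding gpdf_def by measurable

lemma gumbel_lim: assumes "s > 0" shows "((\<lambda>x::real. - exp (- exp ((x + m) / s))) \<longlongrightarrow> 0) at_top"
  using assms by real_asymp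

lemma gumbel_int:
  assumes s: "s > 0"
  shows "(\<integral>\<^sup>+x. ennreal (gpdf m s x) * indicator {..a} x \<partial>lborel) = ennreal (gumbel_cdf m s a)"
proof -
  have "(\<integral>\<^sup>+x. ennreal (gpdf m s x) * indicator {..a} x \<partial>lborel)
      = ennreal \<bar>-1\<bar> * (\<integral>\<^sup>+x. ennreal (gpdf m s (0 + -1 * x)) * indicator {..a} (0 + -1 * x) \<partial>lborel)"
    by (rule nn_integral_real_affine) auto
  also have "\<dots> = (\<integral>\<^sup>+x. ennreal (gpdf m s (- x)) * indicator {- a..} x \<partial>lborel)"
    by (simp add: indicator_def) (intro nn_integral_cong arg_cong2[where f=times] refl, auto)
  also have "\<dots> = ennreal (0 - (- exp (- exp ((- a + m) / s))))"
  proof (rule nn_integral_FTC_atLeast)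
    show "(\<lambda>x. gpdf m s (- x)) \<in> borel_measurable borel" by measurable
    show "DERIV (\<lambda>x. - exp (- exp ((x + m) / s))) x :> gpdf m s (- x)" for x
      unfolding gpdf_def using s
      by (auto intro!: derivative_eq_intros simp: field_simps)
    show "0 \<le> gpdf m s (- x)" for x using s by (rule gpdf_nonneg)
    show "((\<lambda>x::real. - exp (- exp ((x + m) / s))) \<longlongrightarrow> 0) at_top" using s by (rule gumbel_lim)
  qed
  also have "\<dots> = ennreal (gumbel_cdf m s a)"
    by (simp add: gumbel_cdf_def field_simps)
  finally show ?thesis .
qed

lemma gumbel_distributed:
  assumes M: "prob_space M" and s: "s > 0" and Z[measurable]: "Z \<in> borel_measurable M"
    and cdf: "\<And>x. measure M {\<omega> \<in> space M. Z \<omega> \<le> x} = gumbel_cdf m s x"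
  shows "distributed M lborel Z (\<lambda>x. ennreal (gpdf m s x))"
proof -
  interpret prob_space M by fact
  show ?thesis
  proof (rule distributedI_borel_atMost[where g="gumbel_cdf m s"])
    show "(\<integral>\<^sup>+x. ennreal (gpdf m s x * indicator {..a} x) \<partial>lborel) = ennreal (gumbel_cdf m s a)" for a
      unfolding gumbel_int[OF s, of m a, symmetric]
      by (intro nn_integral_cong) (simp split: split_indicator)
    show "emeasure M {x \<in> space M. Z x \<le> a} = ennreal (gumbel_cdf m s a)" for a
      using cdf[of a] by (simp add: emeasure_eq_measure)
  qed (use s gpdf_nonneg in auto)
qed

lemma gpdf_ratio_mono:
  assumes s: "s > 0" and le: "m' \<le> m"
  shows "mono (\<lambda>x. gpdf m s x / gpdf m' s x)"
proof -
  have eq: "gpdf m s x / gpdf m' s x = exp ((m - m') / s - exp (- x / s) * (exp (m / s) - exp (m' / s)))" for x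
  proof -
    have e1: "exp (- (x - m) / s) = exp (- x / s) * exp (m / s)"
      by (simp add: exp_add[symmetric] diff_divide_distrib)
    have e2: "exp (- (x - m') / s) = exp (- x / s) * exp (m' / s)"
      by (simp add: exp_add[symmetric] diff_divide_distrib)
    show ?thesis using s unfolding gpdf_def e1 e2
      by (simp add: exp_diff exp_add[symmetric] exp_minus field_simps right_diff_distrib)
  qed
  have c: "exp (m' / s) \<le> exp (m / s)" using s le by (simp add: divide_right_mono)
  show ?thesis unfolding mono_def eq
  proof (intro allI impI)
    fix x y :: real assume "x \<le> y"
    then have "exp (- y / s) \<le> exp (- x / s)" using s by (simp add: divide_right_mono)
    then have "exp (- y / s) * (exp (m / s) - exp (m' / s)) \<le> exp (- x / s) * (exp (m / s) - exp (m' / s))"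
      using c by (intro mult_right_mono) auto
    then show "exp ((m - m') / s - exp (- x / s) * (exp (m / s) - exp (m' / s)))
             \<le> exp ((m - m') / s - exp (- y / s) * (exp (m / s) - exp (m' / s)))" by simp
  qed
qed

lemma max_gumbel_cdf:
  assumes M: "prob_space M" and s: "s > 0" and I: "finite I" "I \<noteq> {}"
    and ind: "prob_space.indep_vars M (\<lambda>_. borel) X I"
    and g: "\<And>i. i \<in> I \<Longrightarrow> is_gumbel M (X i) (mu i) s"
  shows "measure M {\<omega> \<in> space M. Max ((\<lambda>i. X i \<omega>) ` I) \<le> x}
         = gumbel_cdf (s * ln (\<Sum>i\<in>I. exp (mu i / s))) s x"
proof -
  interpret prob_space M by fact
  have set: "{\<omega> \<in> space M. Max ((\<lambda>i. X i \<omega>) ` I) \<le> x} = (\<Inter>i\<in>I. X i -` {..x} \<inter> space M)"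
    using I by auto
  have "prob (\<Inter>i\<in>I. X i -` {..x} \<inter> space M) = (\<Prod>i\<in>I. prob (X i -` {..x} \<inter> space M))"
    by (rule indep_varsD[OF ind]) (use I in auto)
  also have "\<dots> = (\<Prod>i\<in>I. gumbel_cdf (mu i) s x)"
  proof (rule prod.cong)
    fix i assume "i \<in> I"
    then have "prob {\<omega> \<in> space M. X i \<omega> \<le> x} = gumbel_cdf (mu i) s x"
      using g unfolding is_gumbel_def by blast
    moreover have "X i -` {..x} \<inter> space M = {\<omega> \<in> space M. X i \<omega> \<le> x}" by auto
    ultimately show "prob (X i -` {..x} \<inter> space M) = gumbel_cdf (mu i) s x" by simp
  qed simp
  also have "\<dots> = exp (- (\<Sum>i\<in>I. exp (- (x - mu i) / s)))"
    unfolding gumbel_cdf_def sum_negf[symmetric] by (rule exp_sum[symmetric], rule I(1))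
  also have "\<dots> = gumbel_cdf (s * ln (\<Sum>i\<in>I. exp (mu i / s))) s x"
  proof -
    have pos: "(\<Sum>i\<in>I. exp (mu i / s)) > 0" using I by (intro sum_pos) auto
    have "exp (- (x - s * ln (\<Sum>i\<in>I. exp (mu i / s))) / s) = exp (- x / s) * exp (ln (\<Sum>i\<in>I. exp (mu i / s)))"
      using s by (simp add: exp_add[symmetric] field_simps)
    also have "\<dots> = (\<Sum>i\<in>I. exp (- x / s) * exp (mu i / s))"
      using pos by (simp add: sum_distrib_left)
    also have "\<dots> = (\<Sum>i\<in>I. exp (- (x - mu i) / s))"
      by (intro sum.cong refl) (simp add: exp_add[symmetric] diff_divide_distrib)
    finally show ?thesis unfolding gumbel_cdf_def by simp
  qed
  finally show ?thesis using set by simp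
qed

theorem theorem3p1:
  fixes M :: "'a measure" and N :: "'b measure"
    and X :: "nat \<Rightarrow> 'a \<Rightarrow> real" and Y :: "nat \<Rightarrow> 'b \<Rightarrow> real"
    and mu mu' :: "nat \<Rightarrow> real" and scl :: real and n :: nat
  assumes "prob_space M" and "prob_space N"
    and "scl > 0" and "n \<ge> 1"
    and "prob_space.indep_vars M (\<lambda>_. borel) X {1..n}"
    and "prob_space.indep_vars N (\<lambda>_. borel) Y {1..n}"
    and "\<And>i. i \<in> {1..n} \<Longrightarrow> is_gumbel M (X i) (mu i) scl"
    and "\<And>i. i \<in> {1..n} \<Longrightarrow> is_gumbel N (Y i) (mu' i) scl"
    and "\<And>i. i \<in> {1..n} \<Longrightarrow> mu i \<ge> mu' i"
  shows "lr_le N (\<lambda>\<omega>. Max ((\<lambda>i. Y i \<omega>) ` {1..n}))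
               M (\<lambda>\<omega>. Max ((\<lambda>i. X i \<omega>) ` {1..n}))"
proof -
  define m where "m = scl * ln (\<Sum>i\<in>{1..n}. exp (mu i / scl))"
  define m' where "m' = scl * ln (\<Sum>i\<in>{1..n}. exp (mu' i / scl))"
  have ne: "{1..n} \<noteq> {}" using assms(4) by auto
  have "(\<Sum>i\<in>{1..n}. exp (mu' i / scl)) \<le> (\<Sum>i\<in>{1..n}. exp (mu i / scl))"
    using assms(3,9) by (intro sum_mono) (simp add: divide_right_mono)
  moreover have "(\<Sum>i\<in>{1..n}. exp (mu' i / scl)) > 0" using ne by (intro sum_pos) auto
  ultimately have "m' \<le> m" unfolding m_def m'_def using assms(3) by simp
  have mX: "(\<lambda>\<omega>. Max ((\<lambda>i. X i \<omega>) ` {1..n})) \<in> borel_measurable M"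
    using assms(7) by (intro borel_measurable_Max) (auto simp: is_gumbel_def)
  have mY: "(\<lambda>\<omega>. Max ((\<lambda>i. Y i \<omega>) ` {1..n})) \<in> borel_measurable N"
    using assms(8) by (intro borel_measurable_Max) (auto simp: is_gumbel_def)
  have dX: "distributed M lborel (\<lambda>\<omega>. Max ((\<lambda>i. X i \<omega>) ` {1..n})) (\<lambda>x. ennreal (gpdf m scl x))"
    by (rule gumbel_distributed[OF assms(1,3) mX])
       (unfold m_def, rule max_gumbel_cdf[OF assms(1,3) _ ne assms(5,7)], auto)
  have dY: "distributed N lborel (\<lambda>\<omega>. Max ((\<lambda>i. Y i \<omega>) ` {1..n})) (\<lambda>x. ennreal (gpdf m' scl x))"
    by (rule gumbel_distributed[OF assms(2,3) mY])
       (unfold m'_def, rule max_gumbel_cdf[OF assms(2,3) _ ne assms(6,8)], auto)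
  show ?thesis unfolding lr_le_def
    using dX dY gpdf_nonneg[OF assms(3)] gpdf_ratio_mono[OF assms(3) \<open>m' \<le> m\<close>] by blast
qed

end
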